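(* There exist six hyperplanes $W_1,\dots,W_6\subset\mathbb R^4$ which do phase retrieval on $\mathbb R^4$, but such that the one-dimensional subspaces $\{W_i^\perp\}_{i=1}^6$ do not do phase retrieval on $\mathbb R^4$.
   Context: A hyperplane in $\mathbb R^4$ is a 3-dimensional subspace. A family of subspaces $\{W_i\}$ with orthogonal projections $P_i$ does phase retrieval if whenever $x,y\in\mathbb R^4$ satisfy $\|P_ix\|=\|P_iy\|$ for all $i$, then $x=\pm y$. *)

theory Defs
  imports "HOL-Analysis.Analysis"
begin

definition orth_proj :: "'a::euclidean_space set \<Rightarrow> 'a \<Rightarrow> 'a" where
  "orth_proj W x = (THE p. p \<in> W \<and> (\<forall>w\<in>W. orthogonal (x - p) w))"

definition does_phase_retrieval :: "'i set \<Rightarrow> ('i \<Rightarrow> 'a::euclidean_space set) \<Rightarrow> bool" where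
  "does_phase_retrieval I W \<longleftrightarrow>
     (\<forall>x y. (\<forall>i\<in>I. norm (orth_proj (W i) x) = norm (orth_proj (W i) y)) \<longrightarrow> x = y \<or> x = - y)"

definition hyperplane4 :: "(real^4) set \<Rightarrow> bool" where
  "hyperplane4 W \<longleftrightarrow> subspace W \<and> dim W = 3"

end

theory Submission
  imports Defs
begin

definition mk4 :: "real \<Rightarrow> real \<Rightarrow> real \<Rightarrow> real \<Rightarrow> real^4" where
  "mk4 a b c d = (\<chi> i. if i = 1 then a else if i = 2 then b else if i = 3 then c else d)"

lemma mk4_nth [simp]:
  "mk4 a b c d $ 1 = a" "mk4 a b c d $ 2 = b" "mk4 a b c d $ 3 = c" "mk4 a b c d $ 4 = d"
  by (simp_all add: mk4_def)

lemma inner4: "(x::real^4) \<bullet> y = x$1 * y$1 + x$2 * y$2 + x$3 * y$3 + x$4 * y$4"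
  by (simp add: inner_vec_def sum_4)

lemma vec4_eq: "(x::real^4) = y \<longleftrightarrow> x$1 = y$1 \<and> x$2 = y$2 \<and> x$3 = y$3 \<and> x$4 = y$4"
  by (simp add: vec_eq_iff forall_4)

lemma orth_proj_unique:
  fixes S :: "'a::euclidean_space set"
  assumes "subspace S" "p \<in> S" "\<forall>w\<in>S. orthogonal (x - p) w"
  shows "orth_proj S x = p"
  unfolding orth_proj_def
proof (rule the_equality)
  show "p \<in> S \<and> (\<forall>w\<in>S. orthogonal (x - p) w)" using assms by blast
  fix q assume q: "q \<in> S \<and> (\<forall>w\<in>S. orthogonal (x - q) w)"
  have d: "q - p \<in> S" using assms(1,2) q subspace_diff by blast
  have 1: "(x - p) \<bullet> (q - p) = 0" using assms(3) d by (simp add: orthogonal_def)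
  have 2: "(x - q) \<bullet> (q - p) = 0" using q d by (simp add: orthogonal_def)
  have e: "(x - p) - (x - q) = q - p" by simp
  have "(q - p) \<bullet> (q - p) = ((x - p) - (x - q)) \<bullet> (q - p)" using e by simp
  also have "\<dots> = (x - p) \<bullet> (q - p) - (x - q) \<bullet> (q - p)" by (rule inner_diff_left)
  finally have "(q - p) \<bullet> (q - p) = 0" using 1 2 by simp
  then show "q = p" by simp
qed

lemma proj_hyp:
  fixes v x :: "'a::euclidean_space"
  assumes "v \<noteq> 0"
  shows "orth_proj {z. v \<bullet> z = 0} x = x - ((v \<bullet> x) / (v \<bullet> v)) *\<^sub>R v"
proof (rule orth_proj_unique)
  show "subspace {z. v \<bullet> z = 0}" by (rule subspace_hyperplane)
  have "v \<bullet> v \<noteq> 0" using assms by simp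
  then show "x - ((v \<bullet> x) / (v \<bullet> v)) *\<^sub>R v \<in> {z. v \<bullet> z = 0}"
    by (simp add: inner_diff_right)
  show "\<forall>w\<in>{z. v \<bullet> z = 0}. orthogonal (x - (x - ((v \<bullet> x) / (v \<bullet> v)) *\<^sub>R v)) w"
    by (simp add: orthogonal_def inner_commute)
qed

lemma proj_line:
  fixes v x :: "'a::euclidean_space"
  assumes "v \<noteq> 0"
  shows "orth_proj (span {v}) x = ((v \<bullet> x) / (v \<bullet> v)) *\<^sub>R v"
proof (rule orth_proj_unique)
  show "subspace (span {v})" by (rule subspace_span)
  show "((v \<bullet> x) / (v \<bullet> v)) *\<^sub>R v \<in> span {v}"
    by (simp add: span_base span_mul)
  have nz: "v \<bullet> v \<noteq> 0" using assms by simp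
  show "\<forall>w\<in>span {v}. orthogonal (x - ((v \<bullet> x) / (v \<bullet> v)) *\<^sub>R v) w"
  proof
    fix w assume "w \<in> span {v}"
    then obtain k where w: "w = k *\<^sub>R v" by (auto simp: span_singleton)
    show "orthogonal (x - ((v \<bullet> x) / (v \<bullet> v)) *\<^sub>R v) w"
      using nz by (simp add: w orthogonal_def inner_diff_left inner_commute[of x v])
  qed
qed

lemma comp_hyp:
  fixes v :: "'a::euclidean_space"
  shows "orthogonal_comp {z. v \<bullet> z = 0} = span {v}"
proof -
  have "{z. v \<bullet> z = 0} = orthogonal_comp (span {v})"
    by (auto simp: orthogonal_comp_def orthogonal_def span_singleton)
  then show ?thesis using orthogonal_comp_self[OF subspace_span] by simp
qed

lemma hyp_sq:
  fixes v x :: "'a::euclidean_space"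
  assumes "v \<noteq> 0"
  shows "(v \<bullet> v) * (norm (orth_proj {z. v \<bullet> z = 0} x))^2 = (v \<bullet> v) * (x \<bullet> x) - (v \<bullet> x)^2"
proof -
  have nz: "v \<bullet> v \<noteq> 0" using assms by simp
  show ?thesis unfolding proj_hyp[OF assms] power2_norm_eq_inner
    using nz by (simp add: inner_diff_left inner_diff_right inner_commute field_simps power2_eq_square)
qed

lemma hyp_eq:
  fixes v x y :: "'a::euclidean_space"
  assumes "v \<noteq> 0" "norm (orth_proj {z. v \<bullet> z = 0} x) = norm (orth_proj {z. v \<bullet> z = 0} y)"
  shows "(v \<bullet> v) * (x \<bullet> x) - (v \<bullet> x)^2 = (v \<bullet> v) * (y \<bullet> y) - (v \<bullet> y)^2"
  using hyp_sq[OF assms(1), of x] hyp_sq[OF assms(1), of y] assms(2) by simp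

lemma line_norm:
  fixes v x :: "'a::euclidean_space"
  assumes "v \<noteq> 0"
  shows "norm (orth_proj (span {v}) x) = \<bar>v \<bullet> x\<bar> / (v \<bullet> v) * norm v"
  unfolding proj_line[OF assms] by simp

lemma fin: "(L::real) = e + T \<Longrightarrow> L = 0 \<Longrightarrow> 0 \<le> T \<Longrightarrow> e \<le> 0"
  by linarith

lemma psd2:
  fixes al be ga s t :: real
  assumes "0 \<le> al" "0 \<le> ga" "be^2 \<le> al * ga"
  shows "0 \<le> al * s^2 + 2 * be * s * t + ga * t^2"
proof (cases "al = 0")
  case True
  then have "be^2 \<le> 0" using assms(3) by simp
  then have "be = 0" by simp
  then show ?thesis using True assms(2) by simp
next
  case False
  then have pos: "0 < al" using assms(1) by simp
  have "al * (al * s^2 + 2 * be * s * t + ga * t^2) = (al * s + be * t)^2 + (al * ga - be^2) * t^2"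
    by (simp add: algebra_simps power2_eq_square)
  also have "\<dots> \<ge> 0" using assms(3) by simp
  finally show ?thesis using pos by (simp add: zero_le_mult_iff)
qed

lemma key_a:
  fixes a1 a2 a3 a4 :: real
  assumes
    mn0: "(((-1) * a2 + (-1) * a4) * (((6/17) * a1 + (2/17) * a2 + (-10/17) * a3 + (6/17) * a4) * a2 - ((11/17) * a1 + (13/34) * a2 + (-7/17) * a3 + (5/34) * a4) * ((11/17) * a1 + (13/34) * a2 + (-7/17) * a3 + (5/34) * a4)) - ((21/17) * a1 + (31/34) * a2 + (-1/17) * a3 + (-43/34) * a4) * (((21/17) * a1 + (31/34) * a2 + (-1/17) * a3 + (-43/34) * a4) * a2 - ((11/17) * a1 + (13/34) * a2 + (-7/17) * a3 + (5/34) * a4) * ((-26/17) * a1 + (-20/17) * a2 + (-2/17) * a3 + (67/34) * a4)) + ((-26/17) * a1 + (-20/17) * a2 + (-2/17) * a3 + (67/34) * a4) * (((21/17) * a1 + (31/34) * a2 + (-1/17) * a3 + (-43/34) * a4) * ((11/17) * a1 + (13/34) * a2 + (-7/17) * a3 + (5/34) * a4) - ((6/17) * a1 + (2/17) * a2 + (-10/17) * a3 + (6/17) * a4) * ((-26/17) * a1 + (-20/17) * a2 + (-2/17) * a3 + (67/34) * a4))) = 0"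
 and
    mn1: "(((-1) * a2 + (-1) * a4) * (((6/17) * a1 + (2/17) * a2 + (-10/17) * a3 + (6/17) * a4) * a3 - a1 * ((11/17) * a1 + (13/34) * a2 + (-7/17) * a3 + (5/34) * a4)) - ((21/17) * a1 + (31/34) * a2 + (-1/17) * a3 + (-43/34) * a4) * (((21/17) * a1 + (31/34) * a2 + (-1/17) * a3 + (-43/34) * a4) * a3 - a1 * ((-26/17) * a1 + (-20/17) * a2 + (-2/17) * a3 + (67/34) * a4)) + ((-20/17) * a1 + (-1/17) * a2 + (-12/17) * a3 + (11/34) * a4) * (((21/17) * a1 + (31/34) * a2 + (-1/17) * a3 + (-43/34) * a4) * ((11/17) * a1 + (13/34) * a2 + (-7/17) * a3 + (5/34) * a4) - ((6/17) * a1 + (2/17) * a2 + (-10/17) * a3 + (6/17) * a4) * ((-26/17) * a1 + (-20/17) * a2 + (-2/17) * a3 + (67/34) * a4))) = 0"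
 and
    mn2: "(((-1) * a2 + (-1) * a4) * (((11/17) * a1 + (13/34) * a2 + (-7/17) * a3 + (5/34) * a4) * a3 - a1 * a2) - ((-26/17) * a1 + (-20/17) * a2 + (-2/17) * a3 + (67/34) * a4) * (((21/17) * a1 + (31/34) * a2 + (-1/17) * a3 + (-43/34) * a4) * a3 - a1 * ((-26/17) * a1 + (-20/17) * a2 + (-2/17) * a3 + (67/34) * a4)) + ((-20/17) * a1 + (-1/17) * a2 + (-12/17) * a3 + (11/34) * a4) * (((21/17) * a1 + (31/34) * a2 + (-1/17) * a3 + (-43/34) * a4) * a2 - ((11/17) * a1 + (13/34) * a2 + (-7/17) * a3 + (5/34) * a4) * ((-26/17) * a1 + (-20/17) * a2 + (-2/17) * a3 + (67/34) * a4))) = 0"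
 and
    mn3: "(((21/17) * a1 + (31/34) * a2 + (-1/17) * a3 + (-43/34) * a4) * (((11/17) * a1 + (13/34) * a2 + (-7/17) * a3 + (5/34) * a4) * a3 - a1 * a2) - ((-26/17) * a1 + (-20/17) * a2 + (-2/17) * a3 + (67/34) * a4) * (((6/17) * a1 + (2/17) * a2 + (-10/17) * a3 + (6/17) * a4) * a3 - a1 * ((11/17) * a1 + (13/34) * a2 + (-7/17) * a3 + (5/34) * a4)) + ((-20/17) * a1 + (-1/17) * a2 + (-12/17) * a3 + (11/34) * a4) * (((6/17) * a1 + (2/17) * a2 + (-10/17) * a3 + (6/17) * a4) * a2 - ((11/17) * a1 + (13/34) * a2 + (-7/17) * a3 + (5/34) * a4) * ((11/17) * a1 + (13/34) * a2 + (-7/17) * a3 + (5/34) * a4))) = 0"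
 and
    mn4: "(((-1) * a2 + (-1) * a4) * (((6/17) * a1 + (2/17) * a2 + (-10/17) * a3 + (6/17) * a4) * a4 - a1 * a1) - ((21/17) * a1 + (31/34) * a2 + (-1/17) * a3 + (-43/34) * a4) * (((21/17) * a1 + (31/34) * a2 + (-1/17) * a3 + (-43/34) * a4) * a4 - a1 * ((-20/17) * a1 + (-1/17) * a2 + (-12/17) * a3 + (11/34) * a4)) + ((-20/17) * a1 + (-1/17) * a2 + (-12/17) * a3 + (11/34) * a4) * (((21/17) * a1 + (31/34) * a2 + (-1/17) * a3 + (-43/34) * a4) * a1 - ((6/17) * a1 + (2/17) * a2 + (-10/17) * a3 + (6/17) * a4) * ((-20/17) * a1 + (-1/17) * a2 + (-12/17) * a3 + (11/34) * a4))) = 0"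
 and
    mn5: "(((-1) * a2 + (-1) * a4) * (((11/17) * a1 + (13/34) * a2 + (-7/17) * a3 + (5/34) * a4) * a4 - a1 * a3) - ((-26/17) * a1 + (-20/17) * a2 + (-2/17) * a3 + (67/34) * a4) * (((21/17) * a1 + (31/34) * a2 + (-1/17) * a3 + (-43/34) * a4) * a4 - a1 * ((-20/17) * a1 + (-1/17) * a2 + (-12/17) * a3 + (11/34) * a4)) + ((-20/17) * a1 + (-1/17) * a2 + (-12/17) * a3 + (11/34) * a4) * (((21/17) * a1 + (31/34) * a2 + (-1/17) * a3 + (-43/34) * a4) * a3 - ((11/17) * a1 + (13/34) * a2 + (-7/17) * a3 + (5/34) * a4) * ((-20/17) * a1 + (-1/17) * a2 + (-12/17) * a3 + (11/34) * a4))) = 0"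
 and
    mn6: "(((21/17) * a1 + (31/34) * a2 + (-1/17) * a3 + (-43/34) * a4) * (((11/17) * a1 + (13/34) * a2 + (-7/17) * a3 + (5/34) * a4) * a4 - a1 * a3) - ((-26/17) * a1 + (-20/17) * a2 + (-2/17) * a3 + (67/34) * a4) * (((6/17) * a1 + (2/17) * a2 + (-10/17) * a3 + (6/17) * a4) * a4 - a1 * a1) + ((-20/17) * a1 + (-1/17) * a2 + (-12/17) * a3 + (11/34) * a4) * (((6/17) * a1 + (2/17) * a2 + (-10/17) * a3 + (6/17) * a4) * a3 - ((11/17) * a1 + (13/34) * a2 + (-7/17) * a3 + (5/34) * a4) * a1)) = 0"
 and
    mn7: "(((-1) * a2 + (-1) * a4) * (a2 * a4 - a3 * a3) - ((-26/17) * a1 + (-20/17) * a2 + (-2/17) * a3 + (67/34) * a4) * (((-26/17) * a1 + (-20/17) * a2 + (-2/17) * a3 + (67/34) * a4) * a4 - a3 * ((-20/17) * a1 + (-1/17) * a2 + (-12/17) * a3 + (11/34) * a4)) + ((-20/17) * a1 + (-1/17) * a2 + (-12/17) * a3 + (11/34) * a4) * (((-26/17) * a1 + (-20/17) * a2 + (-2/17) * a3 + (67/34) * a4) * a3 - a2 * ((-20/17) * a1 + (-1/17) * a2 + (-12/17) * a3 + (11/34) * a4))) = 0"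
 and
    mn8: "(((21/17) * a1 + (31/34) * a2 + (-1/17) * a3 + (-43/34) * a4) * (a2 * a4 - a3 * a3) - ((-26/17) * a1 + (-20/17) * a2 + (-2/17) * a3 + (67/34) * a4) * (((11/17) * a1 + (13/34) * a2 + (-7/17) * a3 + (5/34) * a4) * a4 - a3 * a1) + ((-20/17) * a1 + (-1/17) * a2 + (-12/17) * a3 + (11/34) * a4) * (((11/17) * a1 + (13/34) * a2 + (-7/17) * a3 + (5/34) * a4) * a3 - a2 * a1)) = 0"
 and
    mn9: "(((6/17) * a1 + (2/17) * a2 + (-10/17) * a3 + (6/17) * a4) * (a2 * a4 - a3 * a3) - ((11/17) * a1 + (13/34) * a2 + (-7/17) * a3 + (5/34) * a4) * (((11/17) * a1 + (13/34) * a2 + (-7/17) * a3 + (5/34) * a4) * a4 - a3 * a1) + a1 * (((11/17) * a1 + (13/34) * a2 + (-7/17) * a3 + (5/34) * a4) * a3 - a2 * a1)) = 0"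
  shows "a1 = 0 \<and> a2 = 0 \<and> a3 = 0 \<and> a4 = 0"
proof -
  have id: "((-9/25) * a2 + (-1291/1000) * a4) * (39304 * (((-1) * a2 + (-1) * a4) * (((6/17) * a1 + (2/17) * a2 + (-10/17) * a3 + (6/17) * a4) * a2 - ((11/17) * a1 + (13/34) * a2 + (-7/17) * a3 + (5/34) * a4) * ((11/17) * a1 + (13/34) * a2 + (-7/17) * a3 + (5/34) * a4)) - ((21/17) * a1 + (31/34) * a2 + (-1/17) * a3 + (-43/34) * a4) * (((21/17) * a1 + (31/34) * a2 + (-1/17) * a3 + (-43/34) * a4) * a2 - ((11/17) * a1 + (13/34) * a2 + (-7/17) * a3 + (5/34) * a4) * ((-26/17) * a1 + (-20/17) * a2 + (-2/17) * a3 + (67/34) * a4)) + ((-26/17) * a1 + (-20/17) * a2 + (-2/17) * a3 + (67/34) * a4) * (((21/17) * a1 + (31/34) * a2 + (-1/17) * a3 + (-43/34) * a4) * ((11/17) * a1 + (13/34) * a2 + (-7/17) * a3 + (5/34) * a4) - ((6/17) * a1 + (2/17) * a2 + (-10/17) * a3 + (6/17) * a4) * ((-26/17) * a1 + (-20/17) * a2 + (-2/17) * a3 + (67/34) * a4)))) + ((-1787/1000) * a1 + (63/250) * a2 + (-1563/1000) * a4) * (39304 * (((-1) * a2 + (-1) * a4) * (((6/17) * a1 + (2/17) * a2 + (-10/17) * a3 + (6/17) * a4) * a3 - a1 * ((11/17) * a1 + (13/34) * a2 + (-7/17) * a3 + (5/34) * a4)) - ((21/17) * a1 + (31/34) * a2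 + (-1/17) * a3 + (-43/34) * a4) * (((21/17) * a1 + (31/34) * a2 + (-1/17) * a3 + (-43/34) * a4) * a3 - a1 * ((-26/17) * a1 + (-20/17) * a2 + (-2/17) * a3 + (67/34) * a4)) + ((-20/17) * a1 + (-1/17) * a2 + (-12/17) * a3 + (11/34) * a4) * (((21/17) * a1 + (31/34) * a2 + (-1/17) * a3 + (-43/34) * a4) * ((11/17) * a1 + (13/34) * a2 + (-7/17) * a3 + (5/34) * a4) - ((6/17) * a1 + (2/17) * a2 + (-10/17) * a3 + (6/17) * a4) * ((-26/17) * a1 + (-20/17) * a2 + (-2/17) * a3 + (67/34) * a4)))) + ((-717/1000) * a2 + (-1779/1000) * a3) * (39304 * (((-1) * a2 + (-1) * a4) * (((11/17) * a1 + (13/34) * a2 + (-7/17) * a3 + (5/34) * a4) * a3 - a1 * a2) - ((-26/17) * a1 + (-20/17) * a2 + (-2/17) * a3 + (67/34) * a4) * (((21/17) * a1 + (31/34) * a2 + (-1/17) * a3 + (-43/34) * a4) * a3 - a1 * ((-26/17) * a1 + (-20/17) * a2 + (-2/17) * a3 + (67/34) * a4)) + ((-20/17) * a1 + (-1/17) * a2 + (-12/17) * a3 + (11/34) * a4) * (((21/17) * a1 + (31/34) * a2 + (-1/17) * a3 + (-43/34) * a4) * a2 - ((11/17) * a1 + (13/34) * a2 + (-7/17) * a3 + (5/34) * a4) * ((-26/17) * a1 + (-20/17) * a2 + (-2/17) * a3 + (67/34) * a4)))) + ((867/1000) * a1 + (1227/1000) * a2 + (261/250) * a3 + (1263/250)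 * a4) * (39304 * (((21/17) * a1 + (31/34) * a2 + (-1/17) * a3 + (-43/34) * a4) * (((11/17) * a1 + (13/34) * a2 + (-7/17) * a3 + (5/34) * a4) * a3 - a1 * a2) - ((-26/17) * a1 + (-20/17) * a2 + (-2/17) * a3 + (67/34) * a4) * (((6/17) * a1 + (2/17) * a2 + (-10/17) * a3 + (6/17) * a4) * a3 - a1 * ((11/17) * a1 + (13/34) * a2 + (-7/17) * a3 + (5/34) * a4)) + ((-20/17) * a1 + (-1/17) * a2 + (-12/17) * a3 + (11/34) * a4) * (((6/17) * a1 + (2/17) * a2 + (-10/17) * a3 + (6/17) * a4) * a2 - ((11/17) * a1 + (13/34) * a2 + (-7/17) * a3 + (5/34) * a4) * ((11/17) * a1 + (13/34) * a2 + (-7/17) * a3 + (5/34) * a4)))) + ((-1333/500) * a1 + (1629/1000) * a3) * (39304 * (((-1) * a2 + (-1) * a4) * (((6/17) * a1 + (2/17) * a2 + (-10/17) * a3 + (6/17) * a4) * a4 - a1 * a1) - ((21/17) * a1 + (31/34) * a2 + (-1/17) * a3 + (-43/34) * a4) * (((21/17) * a1 + (31/34) * a2 + (-1/17) * a3 + (-43/34) * a4) * a4 - a1 * ((-20/17) * a1 + (-1/17) * a2 + (-12/17) * a3 + (11/34) * a4)) + ((-20/17) * a1 + (-1/17) * a2 + (-12/17) * a3 + (11/34) * a4) * (((21/17) * a1 + (31/34) * a2 + (-1/17) * a3 + (-43/34) * a4) * a1 - ((6/17) * a1 + (2/17) * a2 + (-10/17) * a3 + (6/17) * a4) * ((-20/17)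 * a1 + (-1/17) * a2 + (-12/17) * a3 + (11/34) * a4)))) + ((-903/1000) * a2) * (39304 * (((-1) * a2 + (-1) * a4) * (((11/17) * a1 + (13/34) * a2 + (-7/17) * a3 + (5/34) * a4) * a4 - a1 * a3) - ((-26/17) * a1 + (-20/17) * a2 + (-2/17) * a3 + (67/34) * a4) * (((21/17) * a1 + (31/34) * a2 + (-1/17) * a3 + (-43/34) * a4) * a4 - a1 * ((-20/17) * a1 + (-1/17) * a2 + (-12/17) * a3 + (11/34) * a4)) + ((-20/17) * a1 + (-1/17) * a2 + (-12/17) * a3 + (11/34) * a4) * (((21/17) * a1 + (31/34) * a2 + (-1/17) * a3 + (-43/34) * a4) * a3 - ((11/17) * a1 + (13/34) * a2 + (-7/17) * a3 + (5/34) * a4) * ((-20/17) * a1 + (-1/17) * a2 + (-12/17) * a3 + (11/34) * a4)))) + ((3743/1000) * a1 + (891/500) * a3 + (347/50) * a4) * (39304 * (((21/17) * a1 + (31/34) * a2 + (-1/17) * a3 + (-43/34) * a4) * (((11/17) * a1 + (13/34) * a2 + (-7/17) * a3 + (5/34) * a4) * a4 - a1 * a3) - ((-26/17) * a1 + (-20/17) * a2 + (-2/17) * a3 + (67/34) * a4) * (((6/17) * a1 + (2/17) * a2 + (-10/17) * a3 + (6/17) * a4) * a4 - a1 * a1) + ((-20/17) * a1 + (-1/17) * a2 + (-12/17) * a3 + (11/34) * a4) * (((6/17) * a1 + (2/17) * a2 + (-10/17) * a3 + (6/17) * a4) * a3 - ((11/17) * a1 + (13/34) * a2 + (-7/17)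 * a3 + (5/34) * a4) * a1))) + ((-563/1000) * a3 + (-147/200) * a4) * (39304 * (((-1) * a2 + (-1) * a4) * (a2 * a4 - a3 * a3) - ((-26/17) * a1 + (-20/17) * a2 + (-2/17) * a3 + (67/34) * a4) * (((-26/17) * a1 + (-20/17) * a2 + (-2/17) * a3 + (67/34) * a4) * a4 - a3 * ((-20/17) * a1 + (-1/17) * a2 + (-12/17) * a3 + (11/34) * a4)) + ((-20/17) * a1 + (-1/17) * a2 + (-12/17) * a3 + (11/34) * a4) * (((-26/17) * a1 + (-20/17) * a2 + (-2/17) * a3 + (67/34) * a4) * a3 - a2 * ((-20/17) * a1 + (-1/17) * a2 + (-12/17) * a3 + (11/34) * a4)))) + ((-421/100) * a1 + (-863/250) * a3 + (-29/20) * a4) * (39304 * (((21/17) * a1 + (31/34) * a2 + (-1/17) * a3 + (-43/34) * a4) * (a2 * a4 - a3 * a3) - ((-26/17) * a1 + (-20/17) * a2 + (-2/17) * a3 + (67/34) * a4) * (((11/17) * a1 + (13/34) * a2 + (-7/17) * a3 + (5/34) * a4) * a4 - a3 * a1) + ((-20/17) * a1 + (-1/17) * a2 + (-12/17) * a3 + (11/34) * a4) * (((11/17) * a1 + (13/34) * a2 + (-7/17) * a3 + (5/34) * a4) * a3 - a2 * a1))) + ((193/125) * a3) * (39304 * (((6/17) * a1 + (2/17) * a2 + (-10/17) * a3 + (6/17) * a4) * (a2 * a4 - a3 * a3) - ((11/17) * a1 + (13/34) * a2 + (-7/17) * a3 + (5/34) * a4) * (((11/17) * a1 + (13/34) * a2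 + (-7/17) * a3 + (5/34) * a4) * a4 - a3 * a1) + a1 * (((11/17) * a1 + (13/34) * a2 + (-7/17) * a3 + (5/34) * a4) * a3 - a2 * a1))) = 5000 * (a1^2+a2^2+a3^2+a4^2)^2 + (((502629/1000) * (a1 * a1)^2 + 2 * (-15239/250) * (a1 * a1) * (a1 * a2) + (1032321/1000) * (a1 * a2)^2) + ((138889/250) * (a1 * a1)^2 + 2 * (5863/250) * (a1 * a1) * (a1 * a3) + (22591/20) * (a1 * a3)^2) + ((58256271/250) * (a1 * a1)^2 + 2 * (-21151997/125) * (a1 * a1) * (a1 * a4) + (15538702/125) * (a1 * a4)^2) + ((113645067/500) * (a1 * a1)^2 + 2 * (-40441597/1000) * (a1 * a1) * (a2 * a2) + (1939339/250) * (a2 * a2)^2) + ((138889/250) * (a1 * a1)^2 + 2 * (-3519/500) * (a1 * a1) * (a2 * a3) + (273999/250) * (a2 * a3)^2) + ((138889/250) * (a1 * a1)^2 + 2 * (38123/500) * (a1 * a1) * (a2 * a4) + (1089949/1000) * (a2 * a4)^2) + ((555557/1000) * (a1 * a1)^2 + 2 * 0 * (a1 * a1) * (a3 * a3) + (68121/125) * (a3 * a3)^2) + ((138889/250) * (a1 * a1)^2 + 2 * (-13509/1000) * (a1 * a1) * (a3 * a4) + (1029633/1000) * (a3 * a4)^2) + ((138889/250) * (a1 * a1)^2 + 2 * 0 * (a1 * a1) * (a4 * a4) + (578237/1000) * (a4 * a4)^2) + ((1111111/1000) * (a1 * a2)^2 + 2 * 0 * (a1 * a2) * (a1 * a3) +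 (1111111/1000) * (a1 * a3)^2) + ((6940563/250) * (a1 * a2)^2 + 2 * (-9188809/200) * (a1 * a2) * (a1 * a4) + (40157149/500) * (a1 * a4)^2) + ((1111111/1000) * (a1 * a2)^2 + 2 * (-12023/500) * (a1 * a2) * (a2 * a2) + (138889/250) * (a2 * a2)^2) + ((1111111/1000) * (a1 * a2)^2 + 2 * (873/125) * (a1 * a2) * (a2 * a3) + (1111111/1000) * (a2 * a3)^2) + ((1111111/1000) * (a1 * a2)^2 + 2 * (34371/1000) * (a1 * a2) * (a2 * a4) + (1111111/1000) * (a2 * a4)^2) + ((1111111/1000) * (a1 * a2)^2 + 2 * (2803/125) * (a1 * a2) * (a3 * a3) + (138889/250) * (a3 * a3)^2) + ((1111111/1000) * (a1 * a2)^2 + 2 * (-797/125) * (a1 * a2) * (a3 * a4) + (1111111/1000) * (a3 * a4)^2) + ((1111111/1000) * (a1 * a2)^2 + 2 * (-19883/1000) * (a1 * a2) * (a4 * a4) + (138889/250) * (a4 * a4)^2) + ((8302729/1000) * (a1 * a3)^2 + 2 * (-12206363/1000) * (a1 * a3) * (a1 * a4) + (10914511/500) * (a1 * a4)^2) + ((1111111/1000) * (a1 * a3)^2 + 2 * 0 * (a1 * a3) * (a2 * a2) + (138889/250) * (a2 * a2)^2) + ((1111111/1000) * (a1 * a3)^2 + 2 * 0 * (a1 * a3) * (a2 * a3) + (1111111/1000) * (a2 * a3)^2) + ((1111111/1000) * (a1 * a3)^2 + 2 * 0 * (a1 * a3) * (a2 * a4) + (1111111/1000) * (a2 * a4)^2)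 + ((1111111/1000) * (a1 * a3)^2 + 2 * (-3092/125) * (a1 * a3) * (a3 * a3) + (138889/250) * (a3 * a3)^2) + ((1111111/1000) * (a1 * a3)^2 + 2 * (35389/1000) * (a1 * a3) * (a3 * a4) + (1111111/1000) * (a3 * a4)^2) + ((1111111/1000) * (a1 * a3)^2 + 2 * (-6539/250) * (a1 * a3) * (a4 * a4) + (138889/250) * (a4 * a4)^2) + ((277779/250) * (a1 * a4)^2 + 2 * (-1/1000) * (a1 * a4) * (a2 * a2) + (138889/250) * (a2 * a2)^2) + ((138889/125) * (a1 * a4)^2 + 2 * 0 * (a1 * a4) * (a2 * a3) + (1111111/1000) * (a2 * a3)^2) + ((2024349/40) * (a1 * a4)^2 + 2 * (-1939492/125) * (a1 * a4) * (a2 * a4) + (2987433/500) * (a2 * a4)^2) + ((8086149/200) * (a1 * a4)^2 + 2 * (-8780543/1000) * (a1 * a4) * (a3 * a3) + (629089/250) * (a3 * a3)^2) + ((138889/125) * (a1 * a4)^2 + 2 * 0 * (a1 * a4) * (a3 * a4) + (1111111/1000) * (a3 * a4)^2) + ((138889/125) * (a1 * a4)^2 + 2 * (-2987/1000) * (a1 * a4) * (a4 * a4) + (138889/250) * (a4 * a4)^2) + ((138889/250) * (a2 * a2)^2 + 2 * (15271/1000) * (a2 * a2) * (a2 * a3) + (1111111/1000) * (a2 * a3)^2) + ((3946183/1000) * (a2 * a2)^2 + 2 * (-8645879/2000) * (a2 * a2) * (a2 * a4) + (6662347/1000) * (a2 * a4)^2) + ((7333547/1000) * (a2 * a2)^2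 + 2 * (-6178631/1000) * (a2 * a2) * (a3 * a3) + (3093913/500) * (a3 * a3)^2) + ((138889/250) * (a2 * a2)^2 + 2 * (-4229/200) * (a2 * a2) * (a3 * a4) + (1111111/1000) * (a3 * a4)^2) + ((138889/250) * (a2 * a2)^2 + 2 * 0 * (a2 * a2) * (a4 * a4) + (138889/250) * (a4 * a4)^2) + ((5464573/1000) * (a2 * a3)^2 + 2 * (-46675/8) * (a2 * a3) * (a2 * a4) + (223254/25) * (a2 * a4)^2) + ((1111111/1000) * (a2 * a3)^2 + 2 * (-1983/125) * (a2 * a3) * (a3 * a3) + (138889/250) * (a3 * a3)^2) + ((1111111/1000) * (a2 * a3)^2 + 2 * (27821/1000) * (a2 * a3) * (a3 * a4) + (1111111/1000) * (a3 * a4)^2) + ((1111111/1000) * (a2 * a3)^2 + 2 * (1687/80) * (a2 * a3) * (a4 * a4) + (138889/250) * (a4 * a4)^2) + ((7363391/250) * (a2 * a4)^2 + 2 * (-10095863/500) * (a2 * a4) * (a3 * a3) + (7470271/500) * (a3 * a3)^2) + ((138889/125) * (a2 * a4)^2 + 2 * 0 * (a2 * a4) * (a3 * a4) + (138889/125) * (a3 * a4)^2) + ((1111111/1000) * (a2 * a4)^2 + 2 * (-19347/2000) * (a2 * a4) * (a4 * a4) + (138889/250) * (a4 * a4)^2) + ((549961/250) * (a3 * a3)^2 + 2 * (-1053061/500) * (a3 * a3) * (a3 * a4) + (96584/25) * (a3 * a4)^2) + ((138889/250) * (a3 * a3)^2 + 2 * 0 * (a3 * a3) * (a4 * a4) +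 (138889/250) * (a4 * a4)^2) + ((138889/125) * (a3 * a4)^2 + 2 * (5137/400) * (a3 * a4) * (a4 * a4) + (138889/250) * (a4 * a4)^2))"
    by algebra
  have z: "((-9/25) * a2 + (-1291/1000) * a4) * (39304 * (((-1) * a2 + (-1) * a4) * (((6/17) * a1 + (2/17) * a2 + (-10/17) * a3 + (6/17) * a4) * a2 - ((11/17) * a1 + (13/34) * a2 + (-7/17) * a3 + (5/34) * a4) * ((11/17) * a1 + (13/34) * a2 + (-7/17) * a3 + (5/34) * a4)) - ((21/17) * a1 + (31/34) * a2 + (-1/17) * a3 + (-43/34) * a4) * (((21/17) * a1 + (31/34) * a2 + (-1/17) * a3 + (-43/34) * a4) * a2 - ((11/17) * a1 + (13/34) * a2 + (-7/17) * a3 + (5/34) * a4) * ((-26/17) * a1 + (-20/17) * a2 + (-2/17) * a3 + (67/34) * a4)) + ((-26/17) * a1 + (-20/17) * a2 + (-2/17) * a3 + (67/34) * a4) * (((21/17) * a1 + (31/34) * a2 + (-1/17) * a3 + (-43/34) * a4) * ((11/17) * a1 + (13/34) * a2 + (-7/17) * a3 + (5/34) * a4) - ((6/17) * a1 + (2/17) * a2 + (-10/17) * a3 + (6/17) * a4) * ((-26/17) * a1 + (-20/17) * a2 + (-2/17) * a3 + (67/34) * a4)))) + ((-1787/1000) * a1 + (63/250) * a2 + (-1563/1000) * a4) * (39304 * (((-1) * a2 + (-1) * a4) * (((6/17) * a1 + (2/17) * a2 + (-10/17) * a3 + (6/17) * a4) * a3 - a1 * ((11/17) * a1 + (13/34)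 * a2 + (-7/17) * a3 + (5/34) * a4)) - ((21/17) * a1 + (31/34) * a2 + (-1/17) * a3 + (-43/34) * a4) * (((21/17) * a1 + (31/34) * a2 + (-1/17) * a3 + (-43/34) * a4) * a3 - a1 * ((-26/17) * a1 + (-20/17) * a2 + (-2/17) * a3 + (67/34) * a4)) + ((-20/17) * a1 + (-1/17) * a2 + (-12/17) * a3 + (11/34) * a4) * (((21/17) * a1 + (31/34) * a2 + (-1/17) * a3 + (-43/34) * a4) * ((11/17) * a1 + (13/34) * a2 + (-7/17) * a3 + (5/34) * a4) - ((6/17) * a1 + (2/17) * a2 + (-10/17) * a3 + (6/17) * a4) * ((-26/17) * a1 + (-20/17) * a2 + (-2/17) * a3 + (67/34) * a4)))) + ((-717/1000) * a2 + (-1779/1000) * a3) * (39304 * (((-1) * a2 + (-1) * a4) * (((11/17) * a1 + (13/34) * a2 + (-7/17) * a3 + (5/34) * a4) * a3 - a1 * a2) - ((-26/17) * a1 + (-20/17) * a2 + (-2/17) * a3 + (67/34) * a4) * (((21/17) * a1 + (31/34) * a2 + (-1/17) * a3 + (-43/34) * a4) * a3 - a1 * ((-26/17) * a1 + (-20/17) * a2 + (-2/17) * a3 + (67/34) * a4)) + ((-20/17) * a1 + (-1/17) * a2 + (-12/17) * a3 + (11/34) * a4) * (((21/17) * a1 + (31/34) * a2 + (-1/17) * a3 + (-43/34) * a4) * a2 - ((11/17) * a1 + (13/34) * a2 + (-7/17) * a3 + (5/34) * a4) * ((-26/17) * a1 + (-20/17) * a2 + (-2/17) * a3 + (67/34)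 * a4)))) + ((867/1000) * a1 + (1227/1000) * a2 + (261/250) * a3 + (1263/250) * a4) * (39304 * (((21/17) * a1 + (31/34) * a2 + (-1/17) * a3 + (-43/34) * a4) * (((11/17) * a1 + (13/34) * a2 + (-7/17) * a3 + (5/34) * a4) * a3 - a1 * a2) - ((-26/17) * a1 + (-20/17) * a2 + (-2/17) * a3 + (67/34) * a4) * (((6/17) * a1 + (2/17) * a2 + (-10/17) * a3 + (6/17) * a4) * a3 - a1 * ((11/17) * a1 + (13/34) * a2 + (-7/17) * a3 + (5/34) * a4)) + ((-20/17) * a1 + (-1/17) * a2 + (-12/17) * a3 + (11/34) * a4) * (((6/17) * a1 + (2/17) * a2 + (-10/17) * a3 + (6/17) * a4) * a2 - ((11/17) * a1 + (13/34) * a2 + (-7/17) * a3 + (5/34) * a4) * ((11/17) * a1 + (13/34) * a2 + (-7/17) * a3 + (5/34) * a4)))) + ((-1333/500) * a1 + (1629/1000) * a3) * (39304 * (((-1) * a2 + (-1) * a4) * (((6/17) * a1 + (2/17) * a2 + (-10/17) * a3 + (6/17) * a4) * a4 - a1 * a1) - ((21/17) * a1 + (31/34) * a2 + (-1/17) * a3 + (-43/34) * a4) * (((21/17) * a1 + (31/34) * a2 + (-1/17) * a3 + (-43/34) * a4) * a4 - a1 * ((-20/17) * a1 + (-1/17) * a2 + (-12/17) * a3 + (11/34) * a4)) + ((-20/17) * a1 + (-1/17) * a2 + (-12/17) * a3 + (11/34) * a4) * (((21/17) * a1 + (31/34) * a2 + (-1/17) * a3 + (-43/34) * a4) * a1 -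 ((6/17) * a1 + (2/17) * a2 + (-10/17) * a3 + (6/17) * a4) * ((-20/17) * a1 + (-1/17) * a2 + (-12/17) * a3 + (11/34) * a4)))) + ((-903/1000) * a2) * (39304 * (((-1) * a2 + (-1) * a4) * (((11/17) * a1 + (13/34) * a2 + (-7/17) * a3 + (5/34) * a4) * a4 - a1 * a3) - ((-26/17) * a1 + (-20/17) * a2 + (-2/17) * a3 + (67/34) * a4) * (((21/17) * a1 + (31/34) * a2 + (-1/17) * a3 + (-43/34) * a4) * a4 - a1 * ((-20/17) * a1 + (-1/17) * a2 + (-12/17) * a3 + (11/34) * a4)) + ((-20/17) * a1 + (-1/17) * a2 + (-12/17) * a3 + (11/34) * a4) * (((21/17) * a1 + (31/34) * a2 + (-1/17) * a3 + (-43/34) * a4) * a3 - ((11/17) * a1 + (13/34) * a2 + (-7/17) * a3 + (5/34) * a4) * ((-20/17) * a1 + (-1/17) * a2 + (-12/17) * a3 + (11/34) * a4)))) + ((3743/1000) * a1 + (891/500) * a3 + (347/50) * a4) * (39304 * (((21/17) * a1 + (31/34) * a2 + (-1/17) * a3 + (-43/34) * a4) * (((11/17) * a1 + (13/34) * a2 + (-7/17) * a3 + (5/34) * a4) * a4 - a1 * a3) - ((-26/17) * a1 + (-20/17) * a2 + (-2/17) * a3 + (67/34) * a4) * (((6/17) * a1 + (2/17) * a2 + (-10/17) * a3 + (6/17) * a4) * a4 - a1 * a1) + ((-20/17) * a1 + (-1/17) * a2 + (-12/17) * a3 + (11/34) * a4) * (((6/17) * a1 + (2/17) * a2 + (-10/17)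 * a3 + (6/17) * a4) * a3 - ((11/17) * a1 + (13/34) * a2 + (-7/17) * a3 + (5/34) * a4) * a1))) + ((-563/1000) * a3 + (-147/200) * a4) * (39304 * (((-1) * a2 + (-1) * a4) * (a2 * a4 - a3 * a3) - ((-26/17) * a1 + (-20/17) * a2 + (-2/17) * a3 + (67/34) * a4) * (((-26/17) * a1 + (-20/17) * a2 + (-2/17) * a3 + (67/34) * a4) * a4 - a3 * ((-20/17) * a1 + (-1/17) * a2 + (-12/17) * a3 + (11/34) * a4)) + ((-20/17) * a1 + (-1/17) * a2 + (-12/17) * a3 + (11/34) * a4) * (((-26/17) * a1 + (-20/17) * a2 + (-2/17) * a3 + (67/34) * a4) * a3 - a2 * ((-20/17) * a1 + (-1/17) * a2 + (-12/17) * a3 + (11/34) * a4)))) + ((-421/100) * a1 + (-863/250) * a3 + (-29/20) * a4) * (39304 * (((21/17) * a1 + (31/34) * a2 + (-1/17) * a3 + (-43/34) * a4) * (a2 * a4 - a3 * a3) - ((-26/17) * a1 + (-20/17) * a2 + (-2/17) * a3 + (67/34) * a4) * (((11/17) * a1 + (13/34) * a2 + (-7/17) * a3 + (5/34) * a4) * a4 - a3 * a1) + ((-20/17) * a1 + (-1/17) * a2 + (-12/17) * a3 + (11/34) * a4) * (((11/17) * a1 + (13/34) * a2 + (-7/17) * a3 + (5/34) * a4) * a3 - a2 * a1))) + ((193/125) * a3) * (39304 * (((6/17) * a1 + (2/17) * a2 + (-10/17) * a3 + (6/17) * a4) * (a2 * a4 - a3 * a3) - ((11/17) * a1 + (13/34)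 * a2 + (-7/17) * a3 + (5/34) * a4) * (((11/17) * a1 + (13/34) * a2 + (-7/17) * a3 + (5/34) * a4) * a4 - a3 * a1) + a1 * (((11/17) * a1 + (13/34) * a2 + (-7/17) * a3 + (5/34) * a4) * a3 - a2 * a1))) = 0"
    by (simp only: mn0 mn1 mn2 mn3 mn4 mn5 mn6 mn7 mn8 mn9 mult_zero_right add_0_right add_0_left)
  have b0: "0 \<le> (502629/1000) * (a1 * a1)^2 + 2 * (-15239/250) * (a1 * a1) * (a1 * a2) + (1032321/1000) * (a1 * a2)^2"
    by (rule psd2) (simp_all add: power2_eq_square)
  have b1: "0 \<le> (138889/250) * (a1 * a1)^2 + 2 * (5863/250) * (a1 * a1) * (a1 * a3) + (22591/20) * (a1 * a3)^2"
    by (rule psd2) (simp_all add: power2_eq_square)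
  have b2: "0 \<le> (58256271/250) * (a1 * a1)^2 + 2 * (-21151997/125) * (a1 * a1) * (a1 * a4) + (15538702/125) * (a1 * a4)^2"
    by (rule psd2) (simp_all add: power2_eq_square)
  have b3: "0 \<le> (113645067/500) * (a1 * a1)^2 + 2 * (-40441597/1000) * (a1 * a1) * (a2 * a2) + (1939339/250) * (a2 * a2)^2"
    by (rule psd2) (simp_all add: power2_eq_square)
  have b4: "0 \<le> (138889/250) * (a1 * a1)^2 + 2 * (-3519/500) * (a1 * a1) * (a2 * a3) + (273999/250) * (a2 * a3)^2"
    by (rule psd2) (simp_all add: power2_eq_square)
  have b5: "0 \<le> (138889/250) * (a1 * a1)^2 + 2 * (38123/500) * (a1 * a1) * (a2 * a4) + (1089949/1000) * (a2 * a4)^2"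
    by (rule psd2) (simp_all add: power2_eq_square)
  have b6: "0 \<le> (555557/1000) * (a1 * a1)^2 + 2 * 0 * (a1 * a1) * (a3 * a3) + (68121/125) * (a3 * a3)^2"
    by (rule psd2) (simp_all add: power2_eq_square)
  have b7: "0 \<le> (138889/250) * (a1 * a1)^2 + 2 * (-13509/1000) * (a1 * a1) * (a3 * a4) + (1029633/1000) * (a3 * a4)^2"
    by (rule psd2) (simp_all add: power2_eq_square)
  have b8: "0 \<le> (138889/250) * (a1 * a1)^2 + 2 * 0 * (a1 * a1) * (a4 * a4) + (578237/1000) * (a4 * a4)^2"
    by (rule psd2) (simp_all add: power2_eq_square)
  have b9: "0 \<le> (1111111/1000) * (a1 * a2)^2 + 2 * 0 * (a1 * a2) * (a1 * a3) + (1111111/1000) * (a1 * a3)^2"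
    by (rule psd2) (simp_all add: power2_eq_square)
  have b10: "0 \<le> (6940563/250) * (a1 * a2)^2 + 2 * (-9188809/200) * (a1 * a2) * (a1 * a4) + (40157149/500) * (a1 * a4)^2"
    by (rule psd2) (simp_all add: power2_eq_square)
  have b11: "0 \<le> (1111111/1000) * (a1 * a2)^2 + 2 * (-12023/500) * (a1 * a2) * (a2 * a2) + (138889/250) * (a2 * a2)^2"
    by (rule psd2) (simp_all add: power2_eq_square)
  have b12: "0 \<le> (1111111/1000) * (a1 * a2)^2 + 2 * (873/125) * (a1 * a2) * (a2 * a3) + (1111111/1000) * (a2 * a3)^2"
    by (rule psd2) (simp_all add: power2_eq_square)
  have b13: "0 \<le> (1111111/1000) * (a1 * a2)^2 + 2 * (34371/1000) * (a1 * a2) * (a2 * a4) + (1111111/1000) * (a2 * a4)^2"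
    by (rule psd2) (simp_all add: power2_eq_square)
  have b14: "0 \<le> (1111111/1000) * (a1 * a2)^2 + 2 * (2803/125) * (a1 * a2) * (a3 * a3) + (138889/250) * (a3 * a3)^2"
    by (rule psd2) (simp_all add: power2_eq_square)
  have b15: "0 \<le> (1111111/1000) * (a1 * a2)^2 + 2 * (-797/125) * (a1 * a2) * (a3 * a4) + (1111111/1000) * (a3 * a4)^2"
    by (rule psd2) (simp_all add: power2_eq_square)
  have b16: "0 \<le> (1111111/1000) * (a1 * a2)^2 + 2 * (-19883/1000) * (a1 * a2) * (a4 * a4) + (138889/250) * (a4 * a4)^2"
    by (rule psd2) (simp_all add: power2_eq_square)
  have b17: "0 \<le> (8302729/1000) * (a1 * a3)^2 + 2 * (-12206363/1000) * (a1 * a3) * (a1 * a4) + (10914511/500) * (a1 * a4)^2"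
    by (rule psd2) (simp_all add: power2_eq_square)
  have b18: "0 \<le> (1111111/1000) * (a1 * a3)^2 + 2 * 0 * (a1 * a3) * (a2 * a2) + (138889/250) * (a2 * a2)^2"
    by (rule psd2) (simp_all add: power2_eq_square)
  have b19: "0 \<le> (1111111/1000) * (a1 * a3)^2 + 2 * 0 * (a1 * a3) * (a2 * a3) + (1111111/1000) * (a2 * a3)^2"
    by (rule psd2) (simp_all add: power2_eq_square)
  have b20: "0 \<le> (1111111/1000) * (a1 * a3)^2 + 2 * 0 * (a1 * a3) * (a2 * a4) + (1111111/1000) * (a2 * a4)^2"
    by (rule psd2) (simp_all add: power2_eq_square)
  have b21: "0 \<le> (1111111/1000) * (a1 * a3)^2 + 2 * (-3092/125) * (a1 * a3) * (a3 * a3) + (138889/250) * (a3 * a3)^2"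
    by (rule psd2) (simp_all add: power2_eq_square)
  have b22: "0 \<le> (1111111/1000) * (a1 * a3)^2 + 2 * (35389/1000) * (a1 * a3) * (a3 * a4) + (1111111/1000) * (a3 * a4)^2"
    by (rule psd2) (simp_all add: power2_eq_square)
  have b23: "0 \<le> (1111111/1000) * (a1 * a3)^2 + 2 * (-6539/250) * (a1 * a3) * (a4 * a4) + (138889/250) * (a4 * a4)^2"
    by (rule psd2) (simp_all add: power2_eq_square)
  have b24: "0 \<le> (277779/250) * (a1 * a4)^2 + 2 * (-1/1000) * (a1 * a4) * (a2 * a2) + (138889/250) * (a2 * a2)^2"
    by (rule psd2) (simp_all add: power2_eq_square)
  have b25: "0 \<le> (138889/125) * (a1 * a4)^2 + 2 * 0 * (a1 * a4) * (a2 * a3) + (1111111/1000) * (a2 * a3)^2"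
    by (rule psd2) (simp_all add: power2_eq_square)
  have b26: "0 \<le> (2024349/40) * (a1 * a4)^2 + 2 * (-1939492/125) * (a1 * a4) * (a2 * a4) + (2987433/500) * (a2 * a4)^2"
    by (rule psd2) (simp_all add: power2_eq_square)
  have b27: "0 \<le> (8086149/200) * (a1 * a4)^2 + 2 * (-8780543/1000) * (a1 * a4) * (a3 * a3) + (629089/250) * (a3 * a3)^2"
    by (rule psd2) (simp_all add: power2_eq_square)
  have b28: "0 \<le> (138889/125) * (a1 * a4)^2 + 2 * 0 * (a1 * a4) * (a3 * a4) + (1111111/1000) * (a3 * a4)^2"
    by (rule psd2) (simp_all add: power2_eq_square)
  have b29: "0 \<le> (138889/125) * (a1 * a4)^2 + 2 * (-2987/1000) * (a1 * a4) * (a4 * a4) + (138889/250) * (a4 * a4)^2"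
    by (rule psd2) (simp_all add: power2_eq_square)
  have b30: "0 \<le> (138889/250) * (a2 * a2)^2 + 2 * (15271/1000) * (a2 * a2) * (a2 * a3) + (1111111/1000) * (a2 * a3)^2"
    by (rule psd2) (simp_all add: power2_eq_square)
  have b31: "0 \<le> (3946183/1000) * (a2 * a2)^2 + 2 * (-8645879/2000) * (a2 * a2) * (a2 * a4) + (6662347/1000) * (a2 * a4)^2"
    by (rule psd2) (simp_all add: power2_eq_square)
  have b32: "0 \<le> (7333547/1000) * (a2 * a2)^2 + 2 * (-6178631/1000) * (a2 * a2) * (a3 * a3) + (3093913/500) * (a3 * a3)^2"
    by (rule psd2) (simp_all add: power2_eq_square)
  have b33: "0 \<le> (138889/250) * (a2 * a2)^2 + 2 * (-4229/200) * (a2 * a2) * (a3 * a4) + (1111111/1000) * (a3 * a4)^2"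
    by (rule psd2) (simp_all add: power2_eq_square)
  have b34: "0 \<le> (138889/250) * (a2 * a2)^2 + 2 * 0 * (a2 * a2) * (a4 * a4) + (138889/250) * (a4 * a4)^2"
    by (rule psd2) (simp_all add: power2_eq_square)
  have b35: "0 \<le> (5464573/1000) * (a2 * a3)^2 + 2 * (-46675/8) * (a2 * a3) * (a2 * a4) + (223254/25) * (a2 * a4)^2"
    by (rule psd2) (simp_all add: power2_eq_square)
  have b36: "0 \<le> (1111111/1000) * (a2 * a3)^2 + 2 * (-1983/125) * (a2 * a3) * (a3 * a3) + (138889/250) * (a3 * a3)^2"
    by (rule psd2) (simp_all add: power2_eq_square)
  have b37: "0 \<le> (1111111/1000) * (a2 * a3)^2 + 2 * (27821/1000) * (a2 * a3) * (a3 * a4) + (1111111/1000) * (a3 * a4)^2"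
    by (rule psd2) (simp_all add: power2_eq_square)
  have b38: "0 \<le> (1111111/1000) * (a2 * a3)^2 + 2 * (1687/80) * (a2 * a3) * (a4 * a4) + (138889/250) * (a4 * a4)^2"
    by (rule psd2) (simp_all add: power2_eq_square)
  have b39: "0 \<le> (7363391/250) * (a2 * a4)^2 + 2 * (-10095863/500) * (a2 * a4) * (a3 * a3) + (7470271/500) * (a3 * a3)^2"
    by (rule psd2) (simp_all add: power2_eq_square)
  have b40: "0 \<le> (138889/125) * (a2 * a4)^2 + 2 * 0 * (a2 * a4) * (a3 * a4) + (138889/125) * (a3 * a4)^2"
    by (rule psd2) (simp_all add: power2_eq_square)
  have b41: "0 \<le> (1111111/1000) * (a2 * a4)^2 + 2 * (-19347/2000) * (a2 * a4) * (a4 * a4) + (138889/250) * (a4 * a4)^2"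
    by (rule psd2) (simp_all add: power2_eq_square)
  have b42: "0 \<le> (549961/250) * (a3 * a3)^2 + 2 * (-1053061/500) * (a3 * a3) * (a3 * a4) + (96584/25) * (a3 * a4)^2"
    by (rule psd2) (simp_all add: power2_eq_square)
  have b43: "0 \<le> (138889/250) * (a3 * a3)^2 + 2 * 0 * (a3 * a3) * (a4 * a4) + (138889/250) * (a4 * a4)^2"
    by (rule psd2) (simp_all add: power2_eq_square)
  have b44: "0 \<le> (138889/125) * (a3 * a4)^2 + 2 * (5137/400) * (a3 * a4) * (a4 * a4) + (138889/250) * (a4 * a4)^2"
    by (rule psd2) (simp_all add: power2_eq_square)
  note s1 = add_nonneg_nonneg[OF b0 b1]
  note s2 = add_nonneg_nonneg[OF s1 b2]
  note s3 = add_nonneg_nonneg[OF s2 b3]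
  note s4 = add_nonneg_nonneg[OF s3 b4]
  note s5 = add_nonneg_nonneg[OF s4 b5]
  note s6 = add_nonneg_nonneg[OF s5 b6]
  note s7 = add_nonneg_nonneg[OF s6 b7]
  note s8 = add_nonneg_nonneg[OF s7 b8]
  note s9 = add_nonneg_nonneg[OF s8 b9]
  note s10 = add_nonneg_nonneg[OF s9 b10]
  note s11 = add_nonneg_nonneg[OF s10 b11]
  note s12 = add_nonneg_nonneg[OF s11 b12]
  note s13 = add_nonneg_nonneg[OF s12 b13]
  note s14 = add_nonneg_nonneg[OF s13 b14]
  note s15 = add_nonneg_nonneg[OF s14 b15]
  note s16 = add_nonneg_nonneg[OF s15 b16]
  note s17 = add_nonneg_nonneg[OF s16 b17]
  note s18 = add_nonneg_nonneg[OF s17 b18]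
  note s19 = add_nonneg_nonneg[OF s18 b19]
  note s20 = add_nonneg_nonneg[OF s19 b20]
  note s21 = add_nonneg_nonneg[OF s20 b21]
  note s22 = add_nonneg_nonneg[OF s21 b22]
  note s23 = add_nonneg_nonneg[OF s22 b23]
  note s24 = add_nonneg_nonneg[OF s23 b24]
  note s25 = add_nonneg_nonneg[OF s24 b25]
  note s26 = add_nonneg_nonneg[OF s25 b26]
  note s27 = add_nonneg_nonneg[OF s26 b27]
  note s28 = add_nonneg_nonneg[OF s27 b28]
  note s29 = add_nonneg_nonneg[OF s28 b29]
  note s30 = add_nonneg_nonneg[OF s29 b30]
  note s31 = add_nonneg_nonneg[OF s30 b31]
  note s32 = add_nonneg_nonneg[OF s31 b32]
  note s33 = add_nonneg_nonneg[OF s32 b33]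
  note s34 = add_nonneg_nonneg[OF s33 b34]
  note s35 = add_nonneg_nonneg[OF s34 b35]
  note s36 = add_nonneg_nonneg[OF s35 b36]
  note s37 = add_nonneg_nonneg[OF s36 b37]
  note s38 = add_nonneg_nonneg[OF s37 b38]
  note s39 = add_nonneg_nonneg[OF s38 b39]
  note s40 = add_nonneg_nonneg[OF s39 b40]
  note s41 = add_nonneg_nonneg[OF s40 b41]
  note s42 = add_nonneg_nonneg[OF s41 b42]
  note s43 = add_nonneg_nonneg[OF s42 b43]
  note s44 = add_nonneg_nonneg[OF s43 b44]
  have "5000 * (a1^2+a2^2+a3^2+a4^2)^2 \<le> 0"
    by (rule fin[OF id z s44])
  then have s: "a1^2+a2^2+a3^2+a4^2 = 0"
    by simp
  have "a1^2 = 0" "a2^2 = 0" "a3^2 = 0" "a4^2 = 0"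
    using s zero_le_power2[of a1] zero_le_power2[of a2] zero_le_power2[of a3] zero_le_power2[of a4] by linarith+
  then show ?thesis by simp
qed
lemma aux_sign:
  fixes a b c d :: real
  assumes h1: "a * a = b * b" and h2: "a * c = b * d" and h3: "a \<noteq> b"
  shows "c = - d"
proof -
  have "a = - b" using h1 h3 square_eq_iff by blast
  moreover have "b \<noteq> 0" using h3 \<open>a = - b\<close> by auto
  moreover have "b * (c + d) = 0" using h2 \<open>a = - b\<close> by (simp add: algebra_simps)
  ultimately show ?thesis by (simp add: add_eq_0_iff)
qed

lemma sign4:
  fixes x1 x2 x3 x4 y1 y2 y3 y4 :: real
  assumes "x1 * x1 = y1 * y1" "x1 * x2 = y1 * y2" "x1 * x3 = y1 * y3" "x1 * x4 = y1 * y4"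
    "x2 * x1 = y2 * y1" "x2 * x2 = y2 * y2" "x2 * x3 = y2 * y3" "x2 * x4 = y2 * y4"
    "x3 * x1 = y3 * y1" "x3 * x2 = y3 * y2" "x3 * x3 = y3 * y3" "x3 * x4 = y3 * y4"
    "x4 * x1 = y4 * y1" "x4 * x2 = y4 * y2" "x4 * x3 = y4 * y3" "x4 * x4 = y4 * y4"
  shows "(x1 = y1 \<and> x2 = y2 \<and> x3 = y3 \<and> x4 = y4) \<or> (x1 = - y1 \<and> x2 = - y2 \<and> x3 = - y3 \<and> x4 = - y4)"
proof (cases "x1 = y1 \<and> x2 = y2 \<and> x3 = y3 \<and> x4 = y4")
  case True
  then show ?thesis by blast
next
  case False
  then consider "x1 \<noteq> y1" | "x2 \<noteq> y2" | "x3 \<noteq> y3" | "x4 \<noteq> y4" by blast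
  then show ?thesis
  proof cases
    case 1
    then show ?thesis using aux_sign[OF assms(1) assms(1) 1] aux_sign[OF assms(1) assms(2) 1]
        aux_sign[OF assms(1) assms(3) 1] aux_sign[OF assms(1) assms(4) 1] by blast
  next
    case 2
    then show ?thesis using aux_sign[OF assms(6) assms(5) 2] aux_sign[OF assms(6) assms(6) 2]
        aux_sign[OF assms(6) assms(7) 2] aux_sign[OF assms(6) assms(8) 2] by blast
  next
    case 3
    then show ?thesis using aux_sign[OF assms(11) assms(9) 3] aux_sign[OF assms(11) assms(10) 3]
        aux_sign[OF assms(11) assms(11) 3] aux_sign[OF assms(11) assms(12) 3] by blast
  next
    case 4
    then show ?thesis using aux_sign[OF assms(16) assms(13) 4] aux_sign[OF assms(16) assms(14) 4]
        aux_sign[OF assms(16) assms(15) 4] aux_sign[OF assms(16) assms(16) 4] by blast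
  qed
qed

lemma core:
  fixes x1 x2 x3 x4 y1 y2 y3 y4 :: real
  assumes
    h1: "3 * (x1 * x1 + x2 * x2 + x3 * x3 + x4 * x4) - (1 * x1 + 1 * x2 + 1 * x3 + 0 * x4)^2 = 3 * (y1 * y1 + y2 * y2 + y3 * y3 + y4 * y4) - (1 * y1 + 1 * y2 + 1 * y3 + 0 * y4)^2"
  and
    h2: "4 * (x1 * x1 + x2 * x2 + x3 * x3 + x4 * x4) - (1 * x1 + 1 * x2 + 1 * x3 + (-1) * x4)^2 = 4 * (y1 * y1 + y2 * y2 + y3 * y3 + y4 * y4) - (1 * y1 + 1 * y2 + 1 * y3 + (-1) * y4)^2"
  and
    h3: "1 * (x1 * x1 + x2 * x2 + x3 * x3 + x4 * x4) - (0 * x1 + 1 * x2 + 0 * x3 + 0 * x4)^2 = 1 * (y1 * y1 + y2 * y2 + y3 * y3 + y4 * y4) - (0 * y1 + 1 * y2 + 0 * y3 + 0 * y4)^2"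
  and
    h4: "6 * (x1 * x1 + x2 * x2 + x3 * x3 + x4 * x4) - (1 * x1 + 1 * x2 + 0 * x3 + 2 * x4)^2 = 6 * (y1 * y1 + y2 * y2 + y3 * y3 + y4 * y4) - (1 * y1 + 1 * y2 + 0 * y3 + 2 * y4)^2"
  and
    h5: "3 * (x1 * x1 + x2 * x2 + x3 * x3 + x4 * x4) - (0 * x1 + (-1) * x2 + 1 * x3 + (-1) * x4)^2 = 3 * (y1 * y1 + y2 * y2 + y3 * y3 + y4 * y4) - (0 * y1 + (-1) * y2 + 1 * y3 + (-1) * y4)^2"
  and
    h6: "6 * (x1 * x1 + x2 * x2 + x3 * x3 + x4 * x4) - ((-1) * x1 + 2 * x2 + 1 * x3 + 0 * x4)^2 = 6 * (y1 * y1 + y2 * y2 + y3 * y3 + y4 * y4) - ((-1) * y1 + 2 * y2 + 1 * y3 + 0 * y4)^2"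
  shows "(x1 = y1 \<and> x2 = y2 \<and> x3 = y3 \<and> x4 = y4) \<or> (x1 = - y1 \<and> x2 = - y2 \<and> x3 = - y3 \<and> x4 = - y4)"
proof -
  define m11 where "m11 = x1 * x1 - y1 * y1"
  define m12 where "m12 = x1 * x2 - y1 * y2"
  define m13 where "m13 = x1 * x3 - y1 * y3"
  define m14 where "m14 = x1 * x4 - y1 * y4"
  define m22 where "m22 = x2 * x2 - y2 * y2"
  define m23 where "m23 = x2 * x3 - y2 * y3"
  define m24 where "m24 = x2 * x4 - y2 * y4"
  define m33 where "m33 = x3 * x3 - y3 * y3"
  define m34 where "m34 = x3 * x4 - y3 * y4"
  define m44 where "m44 = x4 * x4 - y4 * y4"
  have L1: "(-2) * m11 + 2 * m12 + 2 * m13 + (-2) * m22 + 2 * m23 + (-2) * m33 + (-3) * m44 = 0"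
  proof -
    have "(-2) * m11 + 2 * m12 + 2 * m13 + (-2) * m22 + 2 * m23 + (-2) * m33 + (-3) * m44 = (3 * (y1 * y1 + y2 * y2 + y3 * y3 + y4 * y4) - (1 * y1 + 1 * y2 + 1 * y3 + 0 * y4)^2) - (3 * (x1 * x1 + x2 * x2 + x3 * x3 + x4 * x4) - (1 * x1 + 1 * x2 + 1 * x3 + 0 * x4)^2)"
      unfolding m11_def m12_def m13_def m14_def m22_def m23_def m24_def m33_def m34_def m44_def by algebra
    then show ?thesis using h1 by linarith
  qed
  have L2: "(-3) * m11 + 2 * m12 + 2 * m13 + (-2) * m14 + (-3) * m22 + 2 * m23 + (-2) * m24 + (-3) * m33 + (-2) * m34 + (-3) * m44 = 0"
  proof -
    have "(-3) * m11 + 2 * m12 + 2 * m13 + (-2) * m14 + (-3) * m22 + 2 * m23 + (-2) * m24 + (-3) * m33 + (-2) * m34 + (-3) * m44 = (4 * (y1 * y1 + y2 * y2 + y3 * y3 + y4 * y4) - (1 * y1 + 1 * y2 + 1 * y3 + (-1) * y4)^2) - (4 * (x1 * x1 + x2 * x2 + x3 * x3 + x4 * x4) - (1 * x1 + 1 * x2 + 1 * x3 + (-1) * x4)^2)"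
      unfolding m11_def m12_def m13_def m14_def m22_def m23_def m24_def m33_def m34_def m44_def by algebra
    then show ?thesis using h2 by linarith
  qed
  have L3: "(-1) * m11 + (-1) * m33 + (-1) * m44 = 0"
  proof -
    have "(-1) * m11 + (-1) * m33 + (-1) * m44 = (1 * (y1 * y1 + y2 * y2 + y3 * y3 + y4 * y4) - (0 * y1 + 1 * y2 + 0 * y3 + 0 * y4)^2) - (1 * (x1 * x1 + x2 * x2 + x3 * x3 + x4 * x4) - (0 * x1 + 1 * x2 + 0 * x3 + 0 * x4)^2)"
      unfolding m11_def m12_def m13_def m14_def m22_def m23_def m24_def m33_def m34_def m44_def by algebra
    then show ?thesis using h3 by linarith
  qed
  have L4: "(-5) * m11 + 2 * m12 + 4 * m14 + (-5) * m22 + 4 * m24 + (-6) * m33 + (-2) * m44 = 0"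
  proof -
    have "(-5) * m11 + 2 * m12 + 4 * m14 + (-5) * m22 + 4 * m24 + (-6) * m33 + (-2) * m44 = (6 * (y1 * y1 + y2 * y2 + y3 * y3 + y4 * y4) - (1 * y1 + 1 * y2 + 0 * y3 + 2 * y4)^2) - (6 * (x1 * x1 + x2 * x2 + x3 * x3 + x4 * x4) - (1 * x1 + 1 * x2 + 0 * x3 + 2 * x4)^2)"
      unfolding m11_def m12_def m13_def m14_def m22_def m23_def m24_def m33_def m34_def m44_def by algebra
    then show ?thesis using h4 by linarith
  qed
  have L5: "(-3) * m11 + (-2) * m22 + (-2) * m23 + 2 * m24 + (-2) * m33 + (-2) * m34 + (-2) * m44 = 0"
  proof -
    have "(-3) * m11 + (-2) * m22 + (-2) * m23 + 2 * m24 + (-2) * m33 + (-2) * m34 + (-2) * m44 = (3 * (y1 * y1 + y2 * y2 + y3 * y3 + y4 * y4) - (0 * y1 + (-1) * y2 + 1 * y3 + (-1) * y4)^2) - (3 * (x1 * x1 + x2 * x2 + x3 * x3 + x4 * x4) - (0 * x1 + (-1) * x2 + 1 * x3 + (-1) * x4)^2)"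
      unfolding m11_def m12_def m13_def m14_def m22_def m23_def m24_def m33_def m34_def m44_def by algebra
    then show ?thesis using h5 by linarith
  qed
  have L6: "(-5) * m11 + (-4) * m12 + (-2) * m13 + (-2) * m22 + 4 * m23 + (-5) * m33 + (-6) * m44 = 0"
  proof -
    have "(-5) * m11 + (-4) * m12 + (-2) * m13 + (-2) * m22 + 4 * m23 + (-5) * m33 + (-6) * m44 = (6 * (y1 * y1 + y2 * y2 + y3 * y3 + y4 * y4) - ((-1) * y1 + 2 * y2 + 1 * y3 + 0 * y4)^2) - (6 * (x1 * x1 + x2 * x2 + x3 * x3 + x4 * x4) - ((-1) * x1 + 2 * x2 + 1 * x3 + 0 * x4)^2)"
      unfolding m11_def m12_def m13_def m14_def m22_def m23_def m24_def m33_def m34_def m44_def by algebra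
    then show ?thesis using h6 by linarith
  qed
  have p1: "m11 = ((-1) * m33 + (-1) * m44)" using L1 L2 L3 L4 L5 L6 by linarith
  have p2: "m12 = ((21/17) * m24 + (31/34) * m33 + (-1/17) * m34 + (-43/34) * m44)" using L1 L2 L3 L4 L5 L6 by linarith
  have p3: "m13 = ((-26/17) * m24 + (-20/17) * m33 + (-2/17) * m34 + (67/34) * m44)" using L1 L2 L3 L4 L5 L6 by linarith
  have p4: "m14 = ((-20/17) * m24 + (-1/17) * m33 + (-12/17) * m34 + (11/34) * m44)" using L1 L2 L3 L4 L5 L6 by linarith
  have p5: "m22 = ((6/17) * m24 + (2/17) * m33 + (-10/17) * m34 + (6/17) * m44)" using L1 L2 L3 L4 L5 L6 by linarith
  have p6: "m23 = ((11/17) * m24 + (13/34) * m33 + (-7/17) * m34 + (5/34) * m44)" using L1 L2 L3 L4 L5 L6 by linarith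
  have mm0: "(m11 * (m22 * m33 - m23 * m23) - m12 * (m12 * m33 - m23 * m13) + m13 * (m12 * m23 - m22 * m13)) = 0" unfolding m11_def m12_def m13_def m14_def m22_def m23_def m24_def m33_def m34_def m44_def by algebra
  have mm1: "(m11 * (m22 * m34 - m24 * m23) - m12 * (m12 * m34 - m24 * m13) + m14 * (m12 * m23 - m22 * m13)) = 0" unfolding m11_def m12_def m13_def m14_def m22_def m23_def m24_def m33_def m34_def m44_def by algebra
  have mm2: "(m11 * (m23 * m34 - m24 * m33) - m13 * (m12 * m34 - m24 * m13) + m14 * (m12 * m33 - m23 * m13)) = 0" unfolding m11_def m12_def m13_def m14_def m22_def m23_def m24_def m33_def m34_def m44_def by algebra
  have mm3: "(m12 * (m23 * m34 - m24 * m33) - m13 * (m22 * m34 - m24 * m23) + m14 * (m22 * m33 - m23 * m23)) = 0" unfolding m11_def m12_def m13_def m14_def m22_def m23_def m24_def m33_def m34_def m44_def by algebra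
  have mm4: "(m11 * (m22 * m44 - m24 * m24) - m12 * (m12 * m44 - m24 * m14) + m14 * (m12 * m24 - m22 * m14)) = 0" unfolding m11_def m12_def m13_def m14_def m22_def m23_def m24_def m33_def m34_def m44_def by algebra
  have mm5: "(m11 * (m23 * m44 - m24 * m34) - m13 * (m12 * m44 - m24 * m14) + m14 * (m12 * m34 - m23 * m14)) = 0" unfolding m11_def m12_def m13_def m14_def m22_def m23_def m24_def m33_def m34_def m44_def by algebra
  have mm6: "(m12 * (m23 * m44 - m24 * m34) - m13 * (m22 * m44 - m24 * m24) + m14 * (m22 * m34 - m23 * m24)) = 0" unfolding m11_def m12_def m13_def m14_def m22_def m23_def m24_def m33_def m34_def m44_def by algebra
  have mm7: "(m11 * (m33 * m44 - m34 * m34) - m13 * (m13 * m44 - m34 * m14) + m14 * (m13 * m34 - m33 * m14)) = 0" unfolding m11_def m12_def m13_def m14_def m22_def m23_def m24_def m33_def m34_def m44_def by algebra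
  have mm8: "(m12 * (m33 * m44 - m34 * m34) - m13 * (m23 * m44 - m34 * m24) + m14 * (m23 * m34 - m33 * m24)) = 0" unfolding m11_def m12_def m13_def m14_def m22_def m23_def m24_def m33_def m34_def m44_def by algebra
  have mm9: "(m22 * (m33 * m44 - m34 * m34) - m23 * (m23 * m44 - m34 * m24) + m24 * (m23 * m34 - m33 * m24)) = 0" unfolding m11_def m12_def m13_def m14_def m22_def m23_def m24_def m33_def m34_def m44_def by algebra
  have K: "m24 = 0 \<and> m33 = 0 \<and> m34 = 0 \<and> m44 = 0"
    by (rule key_a) (use mm0 mm1 mm2 mm3 mm4 mm5 mm6 mm7 mm8 mm9 in \<open>simp only: p1 p2 p3 p4 p5 p6\<close>)+
  then have Z: "m11 = 0 \<and> m12 = 0 \<and> m13 = 0 \<and> m14 = 0 \<and> m22 = 0 \<and> m23 = 0 \<and> m24 = 0 \<and> m33 = 0 \<and> m34 = 0 \<and> m44 = 0" using p1 p2 p3 p4 p5 p6 by simp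
  have P: "x1 * x1 = y1 * y1" "x1 * x2 = y1 * y2" "x1 * x3 = y1 * y3" "x1 * x4 = y1 * y4" "x2 * x1 = y2 * y1" "x2 * x2 = y2 * y2" "x2 * x3 = y2 * y3" "x2 * x4 = y2 * y4" "x3 * x1 = y3 * y1" "x3 * x2 = y3 * y2" "x3 * x3 = y3 * y3" "x3 * x4 = y3 * y4" "x4 * x1 = y4 * y1" "x4 * x2 = y4 * y2" "x4 * x3 = y4 * y3" "x4 * x4 = y4 * y4"
    using Z unfolding m11_def m12_def m13_def m14_def m22_def m23_def m24_def m33_def m34_def m44_def by (simp_all add: mult.commute)
  show ?thesis by (rule sign4[OF P])
qed
definition vv :: "nat \<Rightarrow> real^4" where
  "vv i = (if i = 1 then mk4 1 1 1 0 else if i = 2 then mk4 1 1 1 (-1) else if i = 3 then mk4 0 1 0 0 else if i = 4 then mk4 1 1 0 2 else if i = 5 then mk4 0 (-1) 1 (-1) else mk4 (-1) 2 1 0)"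

definition WW :: "nat \<Rightarrow> (real^4) set" where
  "WW i = {z. vv i \<bullet> z = 0}"

lemma vv_nz: "vv i \<noteq> 0"
proof
  assume "vv i = 0"
  then have "vv i \<bullet> vv i = 0" by simp
  moreover have "vv i \<bullet> vv i \<noteq> 0" by (simp add: vv_def inner4)
  ultimately show False by simp
qed

lemma vd1: "vv 1 \<bullet> z = 1 * z$1 + 1 * z$2 + 1 * z$3 + 0 * z$4" by (simp add: vv_def inner4)

lemma vn1: "vv 1 \<bullet> vv 1 = 3" by (simp add: vv_def inner4)

lemma vd2: "vv 2 \<bullet> z = 1 * z$1 + 1 * z$2 + 1 * z$3 + (-1) * z$4" by (simp add: vv_def inner4)

lemma vn2: "vv 2 \<bullet> vv 2 = 4" by (simp add: vv_def inner4)

lemma vd3: "vv 3 \<bullet> z = 0 * z$1 + 1 * z$2 + 0 * z$3 + 0 * z$4" by (simp add: vv_def inner4)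

lemma vn3: "vv 3 \<bullet> vv 3 = 1" by (simp add: vv_def inner4)

lemma vd4: "vv 4 \<bullet> z = 1 * z$1 + 1 * z$2 + 0 * z$3 + 2 * z$4" by (simp add: vv_def inner4)

lemma vn4: "vv 4 \<bullet> vv 4 = 6" by (simp add: vv_def inner4)

lemma vd5: "vv 5 \<bullet> z = 0 * z$1 + (-1) * z$2 + 1 * z$3 + (-1) * z$4" by (simp add: vv_def inner4)

lemma vn5: "vv 5 \<bullet> vv 5 = 3" by (simp add: vv_def inner4)

lemma vd6: "vv 6 \<bullet> z = (-1) * z$1 + 2 * z$2 + 1 * z$3 + 0 * z$4" by (simp add: vv_def inner4)

lemma vn6: "vv 6 \<bullet> vv 6 = 6" by (simp add: vv_def inner4)

lemma xx4: "(z::real^4) \<bullet> z = z$1 * z$1 + z$2 * z$2 + z$3 * z$3 + z$4 * z$4" by (simp add: inner4)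

theorem mainTheorem9:
  shows "\<exists>W :: nat \<Rightarrow> (real^4) set.
           (\<forall>i\<in>{1..6}. hyperplane4 (W i)) \<and>
           does_phase_retrieval {1..6} W \<and>
           \<not> does_phase_retrieval {1..6} (\<lambda>i. orthogonal_comp (W i))"
proof (intro exI[of _ WW] conjI)
  show "\<forall>i\<in>{1..6}. hyperplane4 (WW i)"
  proof
    fix i :: nat assume "i \<in> {1..6}"
    show "hyperplane4 (WW i)" unfolding hyperplane4_def WW_def
      using dim_hyperplane[OF vv_nz[of i]] by (simp add: subspace_hyperplane)
  qed
  show "does_phase_retrieval {1..6} WW"
    unfolding does_phase_retrieval_def
  proof (intro allI impI)
    fix x y :: "real^4"
    assume H: "\<forall>i\<in>{1..6}. norm (orth_proj (WW i) x) = norm (orth_proj (WW i) y)"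
    have E: "(vv i \<bullet> vv i) * (x \<bullet> x) - (vv i \<bullet> x)^2 = (vv i \<bullet> vv i) * (y \<bullet> y) - (vv i \<bullet> y)^2"
      if "i \<in> {1..6}" for i
      using hyp_eq[OF vv_nz, of i x y] H that unfolding WW_def by blast
    have i1: "(1::nat) \<in> {1..6}" by simp
    have h1: "3 * (x$1 * x$1 + x$2 * x$2 + x$3 * x$3 + x$4 * x$4) - (1 * x$1 + 1 * x$2 + 1 * x$3 + 0 * x$4)^2 = 3 * (y$1 * y$1 + y$2 * y$2 + y$3 * y$3 + y$4 * y$4) - (1 * y$1 + 1 * y$2 + 1 * y$3 + 0 * y$4)^2" using E[OF i1] apply (simp only: vn1) by (simp only: vd1 xx4)
    have i2: "(2::nat) \<in> {1..6}" by simp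
    have h2: "4 * (x$1 * x$1 + x$2 * x$2 + x$3 * x$3 + x$4 * x$4) - (1 * x$1 + 1 * x$2 + 1 * x$3 + (-1) * x$4)^2 = 4 * (y$1 * y$1 + y$2 * y$2 + y$3 * y$3 + y$4 * y$4) - (1 * y$1 + 1 * y$2 + 1 * y$3 + (-1) * y$4)^2" using E[OF i2] apply (simp only: vn2) by (simp only: vd2 xx4)
    have i3: "(3::nat) \<in> {1..6}" by simp
    have h3: "1 * (x$1 * x$1 + x$2 * x$2 + x$3 * x$3 + x$4 * x$4) - (0 * x$1 + 1 * x$2 + 0 * x$3 + 0 * x$4)^2 = 1 * (y$1 * y$1 + y$2 * y$2 + y$3 * y$3 + y$4 * y$4) - (0 * y$1 + 1 * y$2 + 0 * y$3 + 0 * y$4)^2" using E[OF i3] apply (simp only: vn3) by (simp only: vd3 xx4)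
    have i4: "(4::nat) \<in> {1..6}" by simp
    have h4: "6 * (x$1 * x$1 + x$2 * x$2 + x$3 * x$3 + x$4 * x$4) - (1 * x$1 + 1 * x$2 + 0 * x$3 + 2 * x$4)^2 = 6 * (y$1 * y$1 + y$2 * y$2 + y$3 * y$3 + y$4 * y$4) - (1 * y$1 + 1 * y$2 + 0 * y$3 + 2 * y$4)^2" using E[OF i4] apply (simp only: vn4) by (simp only: vd4 xx4)
    have i5: "(5::nat) \<in> {1..6}" by simp
    have h5: "3 * (x$1 * x$1 + x$2 * x$2 + x$3 * x$3 + x$4 * x$4) - (0 * x$1 + (-1) * x$2 + 1 * x$3 + (-1) * x$4)^2 = 3 * (y$1 * y$1 + y$2 * y$2 + y$3 * y$3 + y$4 * y$4) - (0 * y$1 + (-1) * y$2 + 1 * y$3 + (-1) * y$4)^2" using E[OF i5] apply (simp only: vn5) by (simp only: vd5 xx4)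
    have i6: "(6::nat) \<in> {1..6}" by simp
    have h6: "6 * (x$1 * x$1 + x$2 * x$2 + x$3 * x$3 + x$4 * x$4) - ((-1) * x$1 + 2 * x$2 + 1 * x$3 + 0 * x$4)^2 = 6 * (y$1 * y$1 + y$2 * y$2 + y$3 * y$3 + y$4 * y$4) - ((-1) * y$1 + 2 * y$2 + 1 * y$3 + 0 * y$4)^2" using E[OF i6] apply (simp only: vn6) by (simp only: vd6 xx4)
    have C: "(x$1 = y$1 \<and> x$2 = y$2 \<and> x$3 = y$3 \<and> x$4 = y$4) \<or> (x$1 = - y$1 \<and> x$2 = - y$2 \<and> x$3 = - y$3 \<and> x$4 = - y$4)"
      by (rule core[OF h1 h2 h3 h4 h5 h6])
    then show "x = y \<or> x = - y" by (simp add: vec4_eq)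
  qed
  show "\<not> does_phase_retrieval {1..6} (\<lambda>i. orthogonal_comp (WW i))"
    unfolding does_phase_retrieval_def WW_def comp_hyp
  proof
    assume H: "\<forall>x y. (\<forall>i\<in>{1..6}. norm (orth_proj (span {vv i}) x) = norm (orth_proj (span {vv i}) y)) \<longrightarrow> x = y \<or> x = - y"
    define x0 where "x0 = mk4 6 3 (-2) (-4)"
    define y0 where "y0 = mk4 (-4) (-3) 0 4"
    have "\<forall>i\<in>{1..6}. norm (orth_proj (span {vv i}) x0) = norm (orth_proj (span {vv i}) y0)"
    proof
      fix i :: nat assume i: "i \<in> {1..6}"
      have "\<bar>vv i \<bullet> x0\<bar> = \<bar>vv i \<bullet> y0\<bar>"
      proof -
        have "i = 1 \<or> i = 2 \<or> i = 3 \<or> i = 4 \<or> i = 5 \<or> i = 6" using i by auto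
        then show ?thesis by (elim disjE) (simp_all add: vv_def inner4 x0_def y0_def)
      qed
      then show "norm (orth_proj (span {vv i}) x0) = norm (orth_proj (span {vv i}) y0)"
        by (simp add: line_norm[OF vv_nz])
    qed
    then have "x0 = y0 \<or> x0 = - y0" using H by blast
    then show False by (simp add: x0_def y0_def vec4_eq)
  qed
qed

end
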